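(* For every nondegenerate counterclockwise triangle $(A,B,C)$ there exists a unique hexagonal grid $\varphi$ with reference triangle $(A,B,C)$, i.e. with $\varphi(\{0,1\})=A$, $\varphi(\{1,\zeta\})=B$, $\varphi(\{\zeta,0\})=C$.
   Context: Let $\zeta=e^{i\pi/3}$ and $\Lambda=\{m+n\zeta: m,n\in\mathbb{Z}\}$. Call $p,q\in\Lambda$ adjacent if $|p-q|=1$, and let $\mathcal{E}$ be the set of unordered pairs $\{p,q\}$ of adjacent lattice points. A hexagonal grid is a map $\varphi:\mathcal{E}\to\mathbb{C}$ such that for every $p\in\Lambda$ there exist $c_p,r_p\in\mathbb{C}$ with $\varphi(\{p,p+\zeta^k\})=c_p+r_p\zeta^k$ for $k=0,\dots,5$. Thus the six points form a regular, possibly degenerate, hexagon $H_p$ listed counterclockwise. For each set $\{p,q,s\}\subset\Lambda$ of three pairwise adjacent lattice points listed counterclockwise, the corresponding triangle of the grid is $(\varphi(\{p,q\}),\varphi(\{q,s\}),\varphi(\{s,p\}))$. The reference triangle of $\varphi$ is $(\varphi(\{0,1\}),\varphi(\{1,\zeta\}),\varphi(\{\zeta,0\}))$. When the reference triangle is counterclockwise and nondegenerate, the three hexagons $H_0,H_1,H_\zeta$ are the regular hexagons erected outwardly on its sides. The grid triangles sharing a vertex with the reference triangle are its flank triangles. *)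

theory Defs
  imports "HOL-Analysis.Analysis"
begin

definition zeta :: complex where
  "zeta = exp (\<i> * of_real (pi / 3))"

definition Lattice :: "complex set" where
  "Lattice = {of_int m + of_int n * zeta | m n. True}"

definition Edges :: "complex set set" where
  "Edges = {{p, q} | p q. p \<in> Lattice \<and> q \<in> Lattice \<and> cmod (p - q) = 1}"

text \<open>A hexagonal grid: values on edges are only relevant on Edges.\<close>
definition hex_grid :: "(complex set \<Rightarrow> complex) \<Rightarrow> bool" where
  "hex_grid \<phi> \<longleftrightarrow> (\<forall>p\<in>Lattice. \<exists>c r. \<forall>k::nat<6. \<phi> {p, p + zeta ^ k} = c + r * zeta ^ k)"

definition has_reference_triangle :: "(complex set \<Rightarrow> complex) \<Rightarrow> complex \<Rightarrow> complex \<Rightarrow> complex \<Rightarrow> bool" where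
  "has_reference_triangle \<phi> A B C \<longleftrightarrow>
     \<phi> {0, 1} = A \<and> \<phi> {1, zeta} = B \<and> \<phi> {zeta, 0} = C"

text \<open>Nondegenerate counterclockwise: positive signed area.\<close>
definition ccw_nondegenerate :: "complex \<Rightarrow> complex \<Rightarrow> complex \<Rightarrow> bool" where
  "ccw_nondegenerate A B C \<longleftrightarrow> Im (cnj (B - A) * (C - A)) > 0"

end

theory Submission
  imports Defs
begin

lemma zeta_eq: "zeta = Complex (1/2) (sqrt 3 / 2)"
proof -
  have "zeta = cis (pi/3)" unfolding zeta_def by (simp add: cis_conv_exp mult.commute)
  also have "\<dots> = Complex (1/2) (sqrt 3 / 2)" by (simp add: cis.ctr cos_60 sin_60)
  finally show ?thesis .
qed

lemma zeta2: "zeta^2 = zeta - 1"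
  unfolding zeta_eq by (simp add: complex_eq_iff power2_eq_square field_simps)

lemma zeta_pows: "zeta^0 = 1" "zeta^1 = zeta" "zeta^2 = zeta - 1" "zeta^3 = -1"
  "zeta^4 = -zeta" "zeta^5 = 1 - zeta"
proof -
  have z3: "zeta^3 = -1"
  proof -
    have "zeta^3 = zeta * zeta^2" by (simp add: eval_nat_numeral)
    also have "\<dots> = zeta * (zeta - 1)" using zeta2 by simp
    also have "\<dots> = zeta^2 - zeta" by (simp add: algebra_simps power2_eq_square)
    also have "\<dots> = -1" using zeta2 by simp
    finally show ?thesis .
  qed
  have z4: "zeta^4 = -zeta"
  proof -
    have "zeta^4 = zeta * zeta^3" by (simp add: eval_nat_numeral)
    then show ?thesis using z3 by simp
  qed
  have z5: "zeta^5 = 1 - zeta"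
  proof -
    have "zeta^5 = zeta * zeta^4" by (simp add: eval_nat_numeral)
    then show ?thesis using z4 zeta2 by (simp add: power2_eq_square)
  qed
  show "zeta^0 = 1" "zeta^1 = zeta" "zeta^2 = zeta - 1" "zeta^3 = -1"
    "zeta^4 = -zeta" "zeta^5 = 1 - zeta" using zeta2 z3 z4 z5 by auto
qed

lemma zeta_ne: "zeta \<noteq> 0" "zeta \<noteq> 1" "zeta \<noteq> -1" "zeta \<noteq> 2" "zeta \<noteq> 1/2"
  unfolding zeta_eq by (auto simp: complex_eq_iff)

definition U :: "complex set" where "U = {1, zeta, zeta - 1, -1, -zeta, 1 - zeta}"

definition F :: "complex \<Rightarrow> complex \<Rightarrow> complex \<Rightarrow> complex \<Rightarrow> complex \<Rightarrow> complex" where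
  "F c0 r0 s p q = c0 + r0 * (p + q) + s * p * q"

lemma F_sym: "F c0 r0 s p q = F c0 r0 s q p"
  unfolding F_def by (simp add: algebra_simps)

definition phiF :: "complex \<Rightarrow> complex \<Rightarrow> complex \<Rightarrow> complex set \<Rightarrow> complex" where
  "phiF c0 r0 s e = (SOME v. \<exists>p q. e = {p, q} \<and> v = F c0 r0 s p q)"

lemma phiF_eq: "phiF c0 r0 s {a, b} = F c0 r0 s a b"
proof -
  have ex: "\<exists>v. \<exists>p q. {a,b} = {p, q} \<and> v = F c0 r0 s p q" by blast
  have "\<exists>p q. {a,b} = {p, q} \<and> phiF c0 r0 s {a,b} = F c0 r0 s p q"
    unfolding phiF_def by (rule someI_ex[OF ex])
  then obtain p q where "{a,b} = {p,q}" "phiF c0 r0 s {a,b} = F c0 r0 s p q" by blast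
  then show ?thesis by (metis F_sym doubleton_eq_iff)
qed

definition LL :: "int \<Rightarrow> int \<Rightarrow> complex" where "LL m n = of_int m + of_int n * zeta"

lemma LL_in: "LL m n \<in> Lattice" unfolding LL_def Lattice_def by blast

lemma Lattice_LL: "p \<in> Lattice \<Longrightarrow> \<exists>m n. p = LL m n" unfolding LL_def Lattice_def by blast

lemma hex_U:
  assumes "hex_grid \<psi>" "p \<in> Lattice"
  shows "\<exists>c r. \<forall>u\<in>U. \<psi> {p, p + u} = c + r * u"
proof -
  obtain c r where h: "\<forall>k::nat<6. \<psi> {p, p + zeta ^ k} = c + r * zeta ^ k"
    using assms unfolding hex_grid_def by blast
  have h0: "\<psi> {p, p + zeta ^ 0} = c + r * zeta ^ 0" using h[rule_format, of 0] by simp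
  have h1: "\<psi> {p, p + zeta ^ 1} = c + r * zeta ^ 1" using h[rule_format, of 1] by simp
  have h2: "\<psi> {p, p + zeta ^ 2} = c + r * zeta ^ 2" using h[rule_format, of 2] by simp
  have h3: "\<psi> {p, p + zeta ^ 3} = c + r * zeta ^ 3" using h[rule_format, of 3] by simp
  have h4: "\<psi> {p, p + zeta ^ 4} = c + r * zeta ^ 4" using h[rule_format, of 4] by simp
  have h5: "\<psi> {p, p + zeta ^ 5} = c + r * zeta ^ 5" using h[rule_format, of 5] by simp
  have "\<forall>u\<in>U. \<psi> {p, p + u} = c + r * u"
    unfolding U_def using h0 h1 h2 h3 h4 h5 unfolding zeta_pows by auto
  then show ?thesis by blast
qed

definition Z :: "(complex set \<Rightarrow> complex) \<Rightarrow> (complex \<Rightarrow> complex \<Rightarrow> complex) \<Rightarrow> complex \<Rightarrow> bool" where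
  "Z \<psi> G p \<longleftrightarrow> (\<forall>u\<in>U. \<psi> {p, p + u} = G p (p + u))"

lemma key:
  assumes "hex_grid \<psi>" "p \<in> Lattice" "u \<in> U" "u' \<in> U" "u \<noteq> u'"
    "\<psi> {p, p + u} = F c0 r0 s p (p + u)" "\<psi> {p, p + u'} = F c0 r0 s p (p + u')"
  shows "Z \<psi> (F c0 r0 s) p"
proof -
  obtain c r where h: "\<forall>u\<in>U. \<psi> {p, p + u} = c + r * u" using hex_U assms by blast
  define C where "C = c0 + 2*r0*p + s*p*p"
  define R where "R = r0 + s*p"
  have FF: "F c0 r0 s p (p + w) = C + R * w" for w
    unfolding F_def C_def R_def by (simp add: algebra_simps)
  have e1: "c + r * u = C + R * u" using h assms FF by metis
  have e2: "c + r * u' = C + R * u'" using h assms FF by metis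
  have "(r - R) * (u - u') = (c + r*u) - (c + r*u') - ((C + R*u) - (C + R*u'))"
    by (simp add: algebra_simps)
  also have "\<dots> = 0" using e1 e2 by simp
  finally have "(r - R) * (u - u') = 0" .
  then have rR: "r = R" using assms(5) by simp
  then have cC: "c = C" using e1 by simp
  show ?thesis unfolding Z_def using h FF rR cC by simp
qed

lemma U_neg: "u \<in> U \<Longrightarrow> -u \<in> U" unfolding U_def by auto

lemma lat_add: "p \<in> Lattice \<Longrightarrow> q \<in> Lattice \<Longrightarrow> p + q \<in> Lattice"
proof -
  assume "p \<in> Lattice" "q \<in> Lattice"
  then obtain m n m' n' where "p = LL m n" "q = LL m' n'" using Lattice_LL by blast
  then have "p + q = LL (m+m') (n+n')" unfolding LL_def by (simp add: algebra_simps)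
  then show ?thesis using LL_in by simp
qed

lemma lat_neg: "p \<in> Lattice \<Longrightarrow> - p \<in> Lattice"
proof -
  assume "p \<in> Lattice"
  then obtain m n where "p = LL m n" using Lattice_LL by blast
  then have "-p = LL (-m) (-n)" unfolding LL_def by (simp add: algebra_simps)
  then show ?thesis using LL_in by simp
qed

lemma lat_diff: "p \<in> Lattice \<Longrightarrow> q \<in> Lattice \<Longrightarrow> p - q \<in> Lattice"
  using lat_add lat_neg by (metis diff_conv_add_uminus)

lemma lat_1: "1 \<in> Lattice" using LL_in[of 1 0] by (simp add: LL_def)
lemma lat_z: "zeta \<in> Lattice" using LL_in[of 0 1] by (simp add: LL_def)

lemmas lat_intros = lat_add lat_diff lat_1 lat_z

lemma step:
  assumes "hex_grid \<psi>" "s \<in> Lattice" "Z \<psi> (F c0 r0 k) a" "Z \<psi> (F c0 r0 k) b"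
    "a = s + u" "b = s + u'" "u \<in> U" "u' \<in> U" "u \<noteq> u'"
  shows "Z \<psi> (F c0 r0 k) s"
proof -
  have A: "\<psi> {s, s + u} = F c0 r0 k s (s + u)"
  proof -
    have "\<psi> {a, a + -u} = F c0 r0 k a (a + - u)" using assms(3) U_neg[OF assms(7)] unfolding Z_def by blast
    moreover have "a + - u = s" using assms(5) by simp
    ultimately show ?thesis using assms(5) by (simp add: insert_commute F_sym)
  qed
  have B: "\<psi> {s, s + u'} = F c0 r0 k s (s + u')"
  proof -
    have "\<psi> {b, b + -u'} = F c0 r0 k b (b + - u')" using assms(4) U_neg[OF assms(8)] unfolding Z_def by blast
    moreover have "b + - u' = s" using assms(6) by simp
    ultimately show ?thesis using assms(6) by (simp add: insert_commute F_sym)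
  qed
  show ?thesis using key[OF assms(1,2,7,8,9) A B] .
qed

lemma zU: "1 \<in> U" "zeta \<in> U" "zeta - 1 \<in> U" "-1 \<in> U" "-zeta \<in> U" "1 - zeta \<in> U"
  unfolding U_def by auto

definition PP where "PP \<psi> c0 r0 k q \<longleftrightarrow> Z \<psi> (F c0 r0 k) q \<and> Z \<psi> (F c0 r0 k) (q + 1)"

lemma spread:
  assumes hx: "hex_grid \<psi>" and q: "q \<in> Lattice" and P: "PP \<psi> c0 r0 k q"
  shows "PP \<psi> c0 r0 k (q + zeta)" "PP \<psi> c0 r0 k (q + 1)" "PP \<psi> c0 r0 k (q - zeta)" "PP \<psi> c0 r0 k (q - 1)"
proof -
  have Z0: "Z \<psi> (F c0 r0 k) q" and Z1: "Z \<psi> (F c0 r0 k) (q+1)" using P unfolding PP_def by auto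
  have Za: "Z \<psi> (F c0 r0 k) (q + zeta)"
    by (rule step[OF hx _ Z0 Z1, of _ "-zeta" "1-zeta"]) (auto intro: lat_intros q zU simp: zeta_ne)
  have Zb: "Z \<psi> (F c0 r0 k) (q + zeta + 1)"
    by (rule step[OF hx _ Za Z1, of _ "-1" "-zeta"]) (auto intro: lat_intros q zU simp: zeta_ne)
  have Zc: "Z \<psi> (F c0 r0 k) (q + 1 + 1)"
    using step[OF hx _ Zb Z1, of _ "zeta - 1" "-1"] lat_add[OF lat_add[OF q lat_1] lat_1] by (auto intro: lat_intros q zU simp: zeta_ne)
  have Zd: "Z \<psi> (F c0 r0 k) (q - zeta + 1)"
    by (rule step[OF hx _ Z1 Z0, of _ "zeta" "zeta - 1"]) (auto intro: lat_intros q zU simp: zeta_ne)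
  have Ze: "Z \<psi> (F c0 r0 k) (q - zeta)"
    by (rule step[OF hx _ Z0 Zd, of _ "zeta" "1"]) (auto intro: lat_intros q zU simp: zeta_ne)
  have Zf: "Z \<psi> (F c0 r0 k) (q - 1)"
    by (rule step[OF hx _ Z0 Ze, of _ "1" "1 - zeta"]) (auto intro: lat_intros q zU simp: zeta_ne)
  show "PP \<psi> c0 r0 k (q + zeta)" "PP \<psi> c0 r0 k (q + 1)" "PP \<psi> c0 r0 k (q - zeta)" "PP \<psi> c0 r0 k (q - 1)"
    unfolding PP_def using Za Zb Zc Zd Ze Zf Z0 Z1 by auto
qed

lemma LL_shift: "LL (m+1) n = LL m n + 1" "LL (m-1) n = LL m n - 1"
  "LL m (n+1) = LL m n + zeta" "LL m (n-1) = LL m n - zeta" "LL 0 0 = 0"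
  unfolding LL_def by (simp_all add: algebra_simps)

lemma allPP:
  assumes hx: "hex_grid \<psi>" and P0: "PP \<psi> c0 r0 k 0"
  shows "PP \<psi> c0 r0 k (LL m n)"
proof -
  have col: "PP \<psi> c0 r0 k (LL 0 n)" for n
  proof (induction n rule: int_induct[where k=0])
    case base then show ?case using P0 by (simp add: LL_shift)
  next
    case (step1 i) then show ?case using spread(1)[OF hx LL_in] by (simp add: LL_shift)
  next
    case (step2 i) then show ?case using spread(3)[OF hx LL_in] by (simp add: LL_shift)
  qed
  show ?thesis
  proof (induction m rule: int_induct[where k=0])
    case base then show ?case using col by simp
  next
    case (step1 i) then show ?case using spread(2)[OF hx LL_in] by (simp add: LL_shift)
  next
    case (step2 i) then show ?case using spread(4)[OF hx LL_in] by (simp add: LL_shift)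
  qed
qed

lemma unit_int:
  fixes m n :: int
  assumes "m*m + m*n + n*n = 1"
  shows "(m = 1 \<and> n = 0) \<or> (m = -1 \<and> n = 0) \<or> (m = 0 \<and> n = 1) \<or> (m = 0 \<and> n = -1)
         \<or> (m = 1 \<and> n = -1) \<or> (m = -1 \<and> n = 1)"
proof -
  have "(2*m+n)*(2*m+n) + 3*(n*n) = 4" using assms by (simp add: algebra_simps)
  moreover have "0 \<le> (2*m+n)*(2*m+n)" by simp
  ultimately have a: "n*n \<le> 1" by linarith
  have "\<bar>n\<bar> \<le> 1"
  proof (rule ccontr)
    assume "\<not> \<bar>n\<bar> \<le> 1"
    then have "2 \<le> \<bar>n\<bar>" by simp
    then have "2*2 \<le> \<bar>n\<bar>*\<bar>n\<bar>" by (intro mult_mono) auto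
    then show False using a by (simp add: abs_mult[symmetric])
  qed
  then have n: "n = 0 \<or> n = 1 \<or> n = -1" by auto
  have mm: "m = 1 \<or> m = -1" if "m*m = 1" for m :: int
  proof -
    have "(m - 1)*(m+1) = 0" using that by (simp add: algebra_simps)
    then show ?thesis by auto
  qed
  have m0: "m = 0 \<or> m = -1" if "m*m + m = 0" for m :: int
  proof -
    have "m * (m+1) = 0" using that by (simp add: algebra_simps)
    then show ?thesis by auto
  qed
  have m1: "m = 0 \<or> m = 1" if "m*m - m = 0" for m :: int
  proof -
    have "m * (m - 1) = 0" using that by (simp add: algebra_simps)
    then show ?thesis by auto
  qed
  from n show ?thesis
  proof (elim disjE)
    assume "n = 0" then show ?thesis using mm[of m] assms by auto
  next
    assume "n = 1" then show ?thesis using m0[of m] assms by auto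
  next
    assume "n = -1" then show ?thesis using m1[of m] assms by auto
  qed
qed

lemma unit_U:
  assumes "p \<in> Lattice" "q \<in> Lattice" "cmod (p - q) = 1"
  shows "q - p \<in> U"
proof -
  obtain m n where d: "q - p = LL m n" using Lattice_LL lat_diff assms by blast
  have "cmod (LL m n) = 1" using assms(3) d[symmetric] norm_minus_commute[of p q] by simp
  then have "(cmod (LL m n))^2 = 1" by simp
  then have e: "(Re (LL m n))^2 + (Im (LL m n))^2 = 1" by (simp add: cmod_power2)
  have re: "Re (LL m n) = m + n/2" and im: "Im (LL m n) = n * sqrt 3 / 2"
    unfolding LL_def zeta_eq by simp_all
  have "(m + n/2)^2 + (n * sqrt 3 / 2)^2 = 1" using e unfolding re im .
  then have "real_of_int m * m + m * n + n * n = 1"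
    by (simp add: power2_eq_square field_simps)
  then have "m*m + m*n + n*n = 1" by (metis of_int_eq_1_iff of_int_add of_int_mult)
  then show ?thesis using unit_int[of m n] unfolding d LL_def U_def by auto
qed

theorem mainTheorem6:
  assumes "ccw_nondegenerate A B C"
  shows "\<exists>\<phi>. hex_grid \<phi> \<and> has_reference_triangle \<phi> A B C \<and>
           (\<forall>\<psi>. hex_grid \<psi> \<and> has_reference_triangle \<psi> A B C \<longrightarrow> (\<forall>e\<in>Edges. \<psi> e = \<phi> e))"
proof -
  define r0 where "r0 = (A - C) / (1 - zeta)"
  define c0 where "c0 = A - r0"
  define k where "k = (B - c0 - r0 * (1 + zeta)) / zeta"
  have z1: "1 - zeta \<noteq> 0" using zeta_ne by simp
  have FA: "F c0 r0 k 0 1 = A" unfolding F_def c0_def by simp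
  have FB: "F c0 r0 k 1 zeta = B" unfolding F_def k_def using zeta_ne by (simp add: field_simps)
  have FC: "F c0 r0 k 0 zeta = C"
  proof -
    have "F c0 r0 k 0 zeta = A - r0 * (1 - zeta)" unfolding F_def c0_def by (simp add: algebra_simps)
    also have "\<dots> = C" unfolding r0_def using z1 by simp
    finally show ?thesis .
  qed
  define \<phi> where "\<phi> = phiF c0 r0 k"
  have hg: "hex_grid \<phi>" unfolding hex_grid_def
  proof
    fix p assume "p \<in> Lattice"
    show "\<exists>c r. \<forall>j::nat<6. \<phi> {p, p + zeta ^ j} = c + r * zeta ^ j"
      by (rule exI[of _ "c0 + 2*r0*p + k*p*p"], rule exI[of _ "r0 + k*p"])
        (simp add: \<phi>_def phiF_eq F_def algebra_simps)
  qed
  have rt: "has_reference_triangle \<phi> A B C"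
    unfolding has_reference_triangle_def \<phi>_def phiF_eq using FA FB FC F_sym by metis
  have uniq: "\<forall>e\<in>Edges. \<psi> e = \<phi> e" if hx: "hex_grid \<psi>" and r: "has_reference_triangle \<psi> A B C" for \<psi>
  proof -
    have r1: "\<psi> {0, 1} = A" and r2: "\<psi> {1, zeta} = B" and r3: "\<psi> {zeta, 0} = C"
      using r unfolding has_reference_triangle_def by auto
    have l0: "(0::complex) \<in> Lattice" using LL_in[of 0 0] LL_shift(5) by simp
    have r1': "\<psi> {1, 0} = A" using r1 by (metis insert_commute)
    have r3': "\<psi> {0, zeta} = C" using r3 by (metis insert_commute)
    have Z0: "Z \<psi> (F c0 r0 k) 0"
    proof (rule key[OF hx l0 zU(1) zU(2)])
      show "(1::complex) \<noteq> zeta" using zeta_ne by metis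
      show "\<psi> {0, 0 + 1} = F c0 r0 k 0 (0 + 1)" using r1 FA by simp
      show "\<psi> {0, 0 + zeta} = F c0 r0 k 0 (0 + zeta)" using r3' FC by simp
    qed
    have Z1: "Z \<psi> (F c0 r0 k) 1"
    proof (rule key[OF hx lat_1 zU(4) zU(3)])
      show "-1 \<noteq> zeta - 1" using zeta_ne by simp
      show "\<psi> {1, 1 + -1} = F c0 r0 k 1 (1 + -1)" using r1' FA F_sym by simp
      show "\<psi> {1, 1 + (zeta - 1)} = F c0 r0 k 1 (1 + (zeta - 1))" using r2 FB by simp
    qed
    have P0: "PP \<psi> c0 r0 k 0" unfolding PP_def using Z0 Z1 by simp
    show ?thesis
    proof
      fix e assume "e \<in> Edges"
      then obtain p q where e: "e = {p, q}" "p \<in> Lattice" "q \<in> Lattice" "cmod (p - q) = 1"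
        unfolding Edges_def by blast
      have u: "q - p \<in> U" using unit_U e by blast
      obtain m n where pm: "p = LL m n" using Lattice_LL e by blast
      have "Z \<psi> (F c0 r0 k) p" using allPP[OF hx P0, of m n] pm unfolding PP_def by simp
      then have "\<psi> {p, p + (q - p)} = F c0 r0 k p (p + (q - p))" using u unfolding Z_def by blast
      then show "\<psi> e = \<phi> e" unfolding e \<phi>_def phiF_eq by simp
    qed
  qed
  show ?thesis using hg rt uniq by blast
qed

end
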